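(* Every graph $G$ with $n$ vertices has an $xy^+$-monotone EPG-representation in a $3n\times 2n$-grid.
   Context: The $w\times h$-grid consists of all grid-points $(i,j)$ with integer coordinates $1\le i\le w$, $1\le j\le h$, and all grid-edges joining grid-points at distance $1$. An EPG-representation of a graph $G$ assigns to each vertex $v$ a path $\mathrm{path}(v)$ in the grid such that $(v,w)$ is an edge of $G$ if and only if $\mathrm{path}(v)$ and $\mathrm{path}(w)$ share a grid-edge. A grid path is $xy$-monotone if every vertical line and every horizontal line meeting it meets it in a single interval; it is $xy^+$-monotone if it is $xy$-monotone and its left endpoint is not above its right endpoint. An $xy^+$-monotone EPG-representation is one in which all vertex-paths are $xy^+$-monotone. *)

theory Defs
  imports "HOL-Analysis.Analysis"
begin

type_synonym gpoint = "int \<times> int"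

definition in_grid :: "nat \<Rightarrow> nat \<Rightarrow> gpoint \<Rightarrow> bool" where
  "in_grid w h p \<longleftrightarrow> 1 \<le> fst p \<and> fst p \<le> int w \<and> 1 \<le> snd p \<and> snd p \<le> int h"

definition grid_adj :: "gpoint \<Rightarrow> gpoint \<Rightarrow> bool" where
  "grid_adj p q \<longleftrightarrow> \<bar>fst p - fst q\<bar> + \<bar>snd p - snd q\<bar> = 1"

definition grid_path :: "nat \<Rightarrow> nat \<Rightarrow> gpoint list \<Rightarrow> bool" where
  "grid_path w h ps \<longleftrightarrow> length ps \<ge> 2 \<and> distinct ps \<and> (\<forall>p\<in>set ps. in_grid w h p)
     \<and> (\<forall>i. Suc i < length ps \<longrightarrow> grid_adj (ps ! i) (ps ! Suc i))"

definition path_edges :: "gpoint list \<Rightarrow> gpoint set set" where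
  "path_edges ps = {{ps ! i, ps ! Suc i} | i. Suc i < length ps}"

definition to_real2 :: "gpoint \<Rightarrow> real \<times> real" where
  "to_real2 p = (real_of_int (fst p), real_of_int (snd p))"

definition path_points :: "gpoint list \<Rightarrow> (real \<times> real) set" where
  "path_points ps = (\<Union>i\<in>{i. Suc i < length ps}. closed_segment (to_real2 (ps ! i)) (to_real2 (ps ! Suc i)))
                     \<union> to_real2 ` set ps"

definition xy_monotone :: "gpoint list \<Rightarrow> bool" where
  "xy_monotone ps \<longleftrightarrow>
     (\<forall>c::real. is_interval {y. (c, y) \<in> path_points ps} \<and> is_interval {x. (x, c) \<in> path_points ps})"

text \<open>xy+-monotone: xy-monotone and the left endpoint is not above the right endpoint.
  With endpoints p = first and q = last point, this means one can name them left/right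
  so that the left one is weakly left of and weakly below the right one.\<close>
definition xy_plus_monotone :: "gpoint list \<Rightarrow> bool" where
  "xy_plus_monotone ps \<longleftrightarrow> xy_monotone ps \<and>
     (let p = hd ps; q = last ps in
        (fst p \<le> fst q \<and> snd p \<le> snd q) \<or> (fst q \<le> fst p \<and> snd q \<le> snd p))"

definition EPG_rep :: "'v set \<Rightarrow> ('v \<Rightarrow> 'v \<Rightarrow> bool) \<Rightarrow> nat \<Rightarrow> nat \<Rightarrow> ('v \<Rightarrow> gpoint list) \<Rightarrow> bool" where
  "EPG_rep V E w h pth \<longleftrightarrow> (\<forall>v\<in>V. grid_path w h (pth v)) \<and>
     (\<forall>v\<in>V. \<forall>u\<in>V. v \<noteq> u \<longrightarrow> (E v u \<longleftrightarrow> path_edges (pth v) \<inter> path_edges (pth u) \<noteq> {}))"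

end

theory Submission imports Defs begin

definition le2 :: "gpoint \<Rightarrow> gpoint \<Rightarrow> bool" where
  "le2 p q \<longleftrightarrow> fst p \<le> fst q \<and> snd p \<le> snd q"

lemma pp_single: "path_points [p] = {to_real2 p}"
  by (simp add: path_points_def)

lemma pp_cons: "path_points (p # q # rest) =
   closed_segment (to_real2 p) (to_real2 q) \<union> path_points (q # rest)"
proof -
  have A: "{i. Suc i < length (p # q # rest)} = insert 0 (Suc ` {i. Suc i < length (q # rest)})"
    by (auto simp: image_iff) (case_tac x; auto)
  show ?thesis
    unfolding path_points_def A by auto
qed

lemma seg_bounds:
  assumes "z \<in> closed_segment (to_real2 p) (to_real2 q)" "le2 p q"
  shows "real_of_int (fst p) \<le> fst z \<and> fst z \<le> real_of_int (fst q) \<and>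
         real_of_int (snd p) \<le> snd z \<and> snd z \<le> real_of_int (snd q)"
proof -
  obtain u where u: "0 \<le> u" "u \<le> 1" "z = (1 - u) *\<^sub>R to_real2 p + u *\<^sub>R to_real2 q"
    using assms(1) unfolding closed_segment_def by auto
  have f: "fst z = real_of_int (fst p) + u * (real_of_int (fst q) - real_of_int (fst p))"
    using u(3) by (simp add: to_real2_def algebra_simps)
  have s: "snd z = real_of_int (snd p) + u * (real_of_int (snd q) - real_of_int (snd p))"
    using u(3) by (simp add: to_real2_def algebra_simps)
  have a: "real_of_int (fst p) \<le> real_of_int (fst q)" "real_of_int (snd p) \<le> real_of_int (snd q)"
    using assms(2) by (auto simp: le2_def)
  have b1: "u * (real_of_int (fst q) - real_of_int (fst p)) \<le> real_of_int (fst q) - real_of_int (fst p)"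
    using u a by (simp add: mult_left_le_one_le)
  have b2: "u * (real_of_int (snd q) - real_of_int (snd p)) \<le> real_of_int (snd q) - real_of_int (snd p)"
    using u a by (simp add: mult_left_le_one_le)
  show ?thesis using f s a b1 b2 u by (auto intro!: mult_nonneg_nonneg)
qed

definition chain2 :: "gpoint list \<Rightarrow> bool" where
  "chain2 ps \<longleftrightarrow> (\<forall>i. Suc i < length ps \<longrightarrow> le2 (ps ! i) (ps ! Suc i))"

lemma chain2_tl: assumes "chain2 (p # ps)" shows "chain2 ps"
  unfolding chain2_def
proof (intro allI impI)
  fix i assume "Suc i < length ps"
  then have "Suc (Suc i) < length (p # ps)" by simp
  then show "le2 (ps ! i) (ps ! Suc i)" using assms[unfolded chain2_def, rule_format, of "Suc i"] by simp
qed

lemma chain2_hd: assumes "chain2 (p # q # ps)" shows "le2 p q"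
  using assms[unfolded chain2_def, rule_format, of 0] by simp

lemma pp_lower:
  "chain2 ps \<Longrightarrow> ps \<noteq> [] \<Longrightarrow> z \<in> path_points ps \<Longrightarrow>
     real_of_int (fst (hd ps)) \<le> fst z \<and> real_of_int (snd (hd ps)) \<le> snd z"
proof (induction ps arbitrary: z rule: induct_list012)
  case 1 then show ?case by simp
next
  case (2 x) then show ?case by (auto simp: pp_single to_real2_def)
next
  case (3 x y zs)
  have c: "chain2 (y # zs)" using 3 chain2_tl by blast
  have l: "le2 x y" using 3 chain2_hd by blast
  from "3.prems"(3) consider "z \<in> closed_segment (to_real2 x) (to_real2 y)" | "z \<in> path_points (y # zs)"
    by (auto simp: pp_cons)
  then show ?case
  proof cases
    case 1 then show ?thesis using seg_bounds[OF 1 l] by simp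
  next
    case 2
    have "real_of_int (fst y) \<le> fst z \<and> real_of_int (snd y) \<le> snd z"
      using "3.IH"(2)[OF c _ 2] by simp
    then show ?thesis using l by (auto simp: le2_def)
  qed
qed

lemma slice_seg_y: fixes a b :: "real \<times> real" and c :: real shows "is_interval {y. (c, y) \<in> closed_segment a b}"
proof -
  have "convex {y. (c, y) \<in> closed_segment a b}"
  proof (rule convexI)
    fix x y u v :: real
    assume x: "x \<in> {y. (c, y) \<in> closed_segment a b}" and y: "y \<in> {y. (c, y) \<in> closed_segment a b}"
      and uv: "0 \<le> u" "0 \<le> v" "u + v = 1"
    have m: "u *\<^sub>R (c, x) + v *\<^sub>R (c, y) \<in> closed_segment a b"
      using x y uv by (intro convexD[OF convex_closed_segment]) auto
    have "u * c + v * c = c" using uv by (metis distrib_right mult_1)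
    then have "u *\<^sub>R (c, x) + v *\<^sub>R (c, y) = (c, u * x + v * y)" by simp
    then show "u *\<^sub>R x + v *\<^sub>R y \<in> {y. (c, y) \<in> closed_segment a b}" using m by simp
  qed
  then show ?thesis using is_interval_convex_1 by blast
qed

lemma slice_seg_x: fixes a b :: "real \<times> real" and c :: real shows "is_interval {x. (x, c) \<in> closed_segment a b}"
proof -
  have "convex {x. (x, c) \<in> closed_segment a b}"
  proof (rule convexI)
    fix x y u v :: real
    assume x: "x \<in> {y. (y, c) \<in> closed_segment a b}" and y: "y \<in> {y. (y, c) \<in> closed_segment a b}"
      and uv: "0 \<le> u" "0 \<le> v" "u + v = 1"
    have m: "u *\<^sub>R (x, c) + v *\<^sub>R (y, c) \<in> closed_segment a b"
      using x y uv by (intro convexD[OF convex_closed_segment]) auto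
    have "u * c + v * c = c" using uv by (metis distrib_right mult_1)
    then have "u *\<^sub>R (x, c) + v *\<^sub>R (y, c) = (u * x + v * y, c)" by simp
    then show "u *\<^sub>R x + v *\<^sub>R y \<in> {y. (y, c) \<in> closed_segment a b}" using m by simp
  qed
  then show ?thesis using is_interval_convex_1 by blast
qed

lemma union_interval:
  fixes S T :: "real set"
  assumes "is_interval S" "is_interval T" "S = {} \<or> T = {} \<or> S \<inter> T \<noteq> {}"
  shows "is_interval (S \<union> T)"
  using assms connected_Un is_interval_connected_1 by (metis Un_empty_left Un_empty_right)

lemma chain_monotone:
  "chain2 ps \<Longrightarrow> ps \<noteq> [] \<Longrightarrow>
    (\<forall>c. is_interval {y. (c, y) \<in> path_points ps} \<and> is_interval {x. (x, c) \<in> path_points ps})"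
proof (induction ps rule: induct_list012)
  case 1 then show ?case by simp
next
  case (2 p)
  show ?case
  proof
    fix c :: real
    have a: "{y. (c, y) \<in> path_points [p]} = (if c = fst (to_real2 p) then {snd (to_real2 p)} else {})"
      by (auto simp: pp_single prod_eq_iff)
    have b: "{x. (x, c) \<in> path_points [p]} = (if c = snd (to_real2 p) then {fst (to_real2 p)} else {})"
      by (auto simp: pp_single prod_eq_iff)
    have s1: "is_interval {snd (to_real2 p)}" "is_interval {fst (to_real2 p)}"
      by (simp_all add: is_interval_convex_1)
    show "is_interval {y. (c, y) \<in> path_points [p]} \<and> is_interval {x. (x, c) \<in> path_points [p]}"
      unfolding a b using s1 by simp
  qed
next
  case (3 p q zs)
  have c: "chain2 (q # zs)" using 3 chain2_tl by blast
  have l: "le2 p q" using 3 chain2_hd by blast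
  note IH = "3.IH"(2)[OF c]
  show ?case
  proof
    fix c :: real
    have e1: "{y. (c, y) \<in> path_points (p # q # zs)} =
      {y. (c, y) \<in> closed_segment (to_real2 p) (to_real2 q)} \<union> {y. (c, y) \<in> path_points (q # zs)}"
      by (auto simp: pp_cons)
    have e2: "{x. (x, c) \<in> path_points (p # q # zs)} =
      {x. (x, c) \<in> closed_segment (to_real2 p) (to_real2 q)} \<union> {x. (x, c) \<in> path_points (q # zs)}"
      by (auto simp: pp_cons)
    have qin: "to_real2 q \<in> path_points (q # zs)" by (simp add: path_points_def)
    have qseg: "to_real2 q \<in> closed_segment (to_real2 p) (to_real2 q)" by simp
    have i1: "is_interval ({y. (c, y) \<in> closed_segment (to_real2 p) (to_real2 q)} \<union> {y. (c, y) \<in> path_points (q # zs)})"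
    proof (rule union_interval[OF slice_seg_y])
      show "is_interval {y. (c, y) \<in> path_points (q # zs)}" using IH by blast
      show "{y. (c, y) \<in> closed_segment (to_real2 p) (to_real2 q)} = {} \<or>
          {y. (c, y) \<in> path_points (q # zs)} = {} \<or>
          {y. (c, y) \<in> closed_segment (to_real2 p) (to_real2 q)} \<inter> {y. (c, y) \<in> path_points (q # zs)} \<noteq> {}"
      proof (cases "{y. (c, y) \<in> closed_segment (to_real2 p) (to_real2 q)} = {} \<or> {y. (c, y) \<in> path_points (q # zs)} = {}")
        case False
        then obtain y1 y2 where y1: "(c, y1) \<in> closed_segment (to_real2 p) (to_real2 q)"
          and y2: "(c, y2) \<in> path_points (q # zs)" by auto
        have "c \<le> real_of_int (fst q)" using seg_bounds[OF y1 l] by simp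
        moreover have "real_of_int (fst q) \<le> c" using pp_lower[OF c _ y2] by simp
        ultimately have "c = fst (to_real2 q)" by (simp add: to_real2_def)
        then have "snd (to_real2 q) \<in> {y. (c, y) \<in> closed_segment (to_real2 p) (to_real2 q)} \<inter> {y. (c, y) \<in> path_points (q # zs)}"
          using qin qseg by (metis (mono_tags) IntI mem_Collect_eq prod.collapse)
        then show ?thesis by blast
      qed auto
    qed
    have i2: "is_interval ({x. (x, c) \<in> closed_segment (to_real2 p) (to_real2 q)} \<union> {x. (x, c) \<in> path_points (q # zs)})"
    proof (rule union_interval[OF slice_seg_x])
      show "is_interval {x. (x, c) \<in> path_points (q # zs)}" using IH by blast
      show "{x. (x, c) \<in> closed_segment (to_real2 p) (to_real2 q)} = {} \<or>
          {x. (x, c) \<in> path_points (q # zs)} = {} \<or>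
          {x. (x, c) \<in> closed_segment (to_real2 p) (to_real2 q)} \<inter> {x. (x, c) \<in> path_points (q # zs)} \<noteq> {}"
      proof (cases "{x. (x, c) \<in> closed_segment (to_real2 p) (to_real2 q)} = {} \<or> {x. (x, c) \<in> path_points (q # zs)} = {}")
        case False
        then obtain y1 y2 where y1: "(y1, c) \<in> closed_segment (to_real2 p) (to_real2 q)"
          and y2: "(y2, c) \<in> path_points (q # zs)" by auto
        have "c \<le> real_of_int (snd q)" using seg_bounds[OF y1 l] by simp
        moreover have "real_of_int (snd q) \<le> c" using pp_lower[OF c _ y2] by simp
        ultimately have "c = snd (to_real2 q)" by (simp add: to_real2_def)
        then have "fst (to_real2 q) \<in> {x. (x, c) \<in> closed_segment (to_real2 p) (to_real2 q)} \<inter> {x. (x, c) \<in> path_points (q # zs)}"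
          using qin qseg by (metis (mono_tags) IntI mem_Collect_eq prod.collapse)
        then show ?thesis by blast
      qed auto
    qed
    show "is_interval {y. (c, y) \<in> path_points (p # q # zs)} \<and> is_interval {x. (x, c) \<in> path_points (p # q # zs)}"
      unfolding e1 e2 using i1 i2 by simp
  qed
qed

lemma chain_xy_monotone: "chain2 ps \<Longrightarrow> ps \<noteq> [] \<Longrightarrow> xy_monotone ps"
  unfolding xy_monotone_def using chain_monotone by blast


definition Rf :: "(int \<Rightarrow> int \<Rightarrow> bool) \<Rightarrow> int \<Rightarrow> int \<Rightarrow> int" where
  "Rf A i y = 2*i + y div 2 + (if odd y \<and> \<not> A i ((y+1) div 2) then 1 else 0)"

fun pt :: "(int \<Rightarrow> int \<Rightarrow> bool) \<Rightarrow> int \<Rightarrow> nat \<Rightarrow> int \<times> int" where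
  "pt A i 0 = (1, 2*i)"
| "pt A i (Suc k) = (let p = pt A i k in
     if fst p < Rf A i (snd p) then (fst p + 1, snd p) else (fst p, snd p + 1))"

declare pt.simps(2)[simp del]

lemma R_lo: "2*i + y div 2 \<le> Rf A i y"
  by (simp add: Rf_def)

lemma R_hi: "Rf A i y \<le> 2*i + (y+1) div 2"
proof (cases "odd y")
  case True then obtain m where "y = 2*m+1" by (auto elim: oddE)
  then show ?thesis by (simp add: Rf_def)
next
  case False then obtain m where "y = 2*m" by (auto elim: evenE)
  then show ?thesis by (simp add: Rf_def)
qed

lemma R_even: "even y \<Longrightarrow> Rf A i y = 2*i + y div 2"
  by (simp add: Rf_def)

lemma R_suc: "Rf A i y \<le> Rf A i (y+1)"
proof (cases "odd y")
  case True then obtain m where m: "y = 2*m+1" by (auto elim: oddE)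
  have "Rf A i (y+1) = 2*i + (y+1) div 2" using m by (simp add: Rf_def)
  then show ?thesis using R_hi[of A i y] by simp
next
  case False then obtain m where m: "y = 2*m" by (auto elim: evenE)
  have "Rf A i y = 2*i + m" using m by (simp add: Rf_def)
  moreover have "2*i + m \<le> Rf A i (y+1)" using R_lo[of i "y+1" A] m by simp
  ultimately show ?thesis by simp
qed

lemma R_mono_nat: "Rf A i y \<le> Rf A i (y + int d)"
proof (induction d)
  case 0 then show ?case by simp
next
  case (Suc d)
  have r: "Rf A i (y + int d) \<le> Rf A i (y + int d + 1)" by (rule R_suc)
  have e: "y + int (Suc d) = y + int d + 1" by simp
  show ?case unfolding e using Suc.IH r by (rule order_trans)
qed

lemma R_mono: assumes "y \<le> y'" shows "Rf A i y \<le> Rf A i y'"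
proof -
  have "y' = y + int (nat (y' - y))" using assms by simp
  then show ?thesis using R_mono_nat[of A i y "nat (y' - y)"] by simp
qed

lemma pt_inv:
  assumes "1 \<le> i"
  shows "2*i \<le> snd (pt A i k) \<and> 1 \<le> fst (pt A i k) \<and> fst (pt A i k) \<le> Rf A i (snd (pt A i k)) \<and>
    (snd (pt A i k) = 2*i \<or> Rf A i (snd (pt A i k) - 1) \<le> fst (pt A i k)) \<and>
    fst (pt A i k) + snd (pt A i k) = 2*i + 1 + int k"
proof (induction k)
  case 0
  have "Rf A i (2*i) = 3*i" by (simp add: Rf_def)
  then show ?case using assms by simp
next
  case (Suc k)
  obtain x y where p: "pt A i k = (x, y)" by fastforce
  show ?case
  proof (cases "x < Rf A i y")
    case True
    then show ?thesis using Suc p by (auto simp: Let_def pt.simps(2))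
  next
    case False
    then have "x = Rf A i y" using Suc p by simp
    moreover have "Rf A i y \<le> Rf A i (y+1)" by (rule R_suc)
    ultimately show ?thesis using Suc p False by (auto simp: Let_def pt.simps(2))
  qed
qed

lemma pt_step: "pt A i (Suc k) = (fst (pt A i k) + 1, snd (pt A i k)) \<or>
   pt A i (Suc k) = (fst (pt A i k), snd (pt A i k) + 1)"
  by (auto simp: Let_def pt.simps(2))

lemma pt_sum: "1 \<le> i \<Longrightarrow> fst (pt A i k) + snd (pt A i k) = 2*i + 1 + int k"
  using pt_inv by blast

definition memb :: "(int \<Rightarrow> int \<Rightarrow> bool) \<Rightarrow> nat \<Rightarrow> int \<Rightarrow> int \<times> int \<Rightarrow> bool" where
  "memb A n i p \<longleftrightarrow> (snd p = 2*i \<and> 1 \<le> fst p \<and> fst p \<le> 3*i) \<or>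
     (2*i < snd p \<and> snd p \<le> 2 * int n \<and> Rf A i (snd p - 1) \<le> fst p \<and> fst p \<le> Rf A i (snd p))"

lemma pt_memb:
  assumes "1 \<le> i" "i \<le> int n" "k < 3*n"
  shows "memb A n i (pt A i k)"
proof -
  obtain x y where p: "pt A i k = (x, y)" by fastforce
  have I: "2*i \<le> y" "1 \<le> x" "x \<le> Rf A i y" "y = 2*i \<or> Rf A i (y - 1) \<le> x" "x + y = 2*i + 1 + int k"
    using pt_inv[OF assms(1), of A k] p by auto
  have "y \<le> 2 * int n"
  proof (rule ccontr)
    assume "\<not> y \<le> 2 * int n"
    then have "y \<noteq> 2*i" using assms by simp
    then have "Rf A i (y - 1) \<le> x" using I by simp
    moreover have "2*i + (y - 1) div 2 \<le> Rf A i (y - 1)" by (rule R_lo)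
    moreover have "int n \<le> (y - 1) div 2" using \<open>\<not> y \<le> 2 * int n\<close> by linarith
    ultimately show False using I(5) assms(3) \<open>\<not> y \<le> 2 * int n\<close> by linarith
  qed
  moreover have "Rf A i (2*i) = 3*i" by (simp add: Rf_def)
  ultimately show ?thesis using I p unfolding memb_def by auto
qed

lemma memb_bounds:
  assumes "memb A n i p" "1 \<le> i" "i \<le> int n"
  shows "1 \<le> fst p \<and> fst p \<le> 3 * int n \<and> 2*i \<le> snd p \<and> snd p \<le> 2 * int n"
proof -
  have "Rf A i (snd p) \<le> 2*i + (snd p + 1) div 2" by (rule R_hi)
  moreover have "2*i + (snd p - 1) div 2 \<le> Rf A i (snd p - 1)" by (rule R_lo)
  ultimately show ?thesis using assms unfolding memb_def by auto
qed

lemma memb_unique: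
  assumes "memb A n i p" "memb A n i q" "fst p + snd p = fst q + snd q"
  shows "p = q"
proof -
  have key: False if "memb A n i p" "memb A n i q" "snd p < snd q" "fst p + snd p = fst q + snd q" for p q
  proof -
    have "2*i < snd q" using that unfolding memb_def by auto
    then have "Rf A i (snd q - 1) \<le> fst q" using that(2) unfolding memb_def by auto
    moreover have "fst p \<le> Rf A i (snd p)" using that(1) unfolding memb_def by (auto simp: Rf_def)
    moreover have "Rf A i (snd p) \<le> Rf A i (snd q - 1)" using that(3) by (intro R_mono) simp
    ultimately show False using that(3,4) by linarith
  qed
  have "snd p = snd q"
    using key[OF assms(1,2)] key[OF assms(2,1)] assms(3) by (metis linorder_neqE)
  then show ?thesis using assms(3) by (simp add: prod_eq_iff)
qed

lemma memb_pt:
  assumes "memb A n i p" "1 \<le> i" "i \<le> int n"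
  shows "\<exists>k<3*n. pt A i k = p"
proof -
  define k where "k = nat (fst p + snd p - 2*i - 1)"
  have b: "1 \<le> fst p" "2*i \<le> snd p" "snd p \<le> 2 * int n" using memb_bounds[OF assms] by auto
  have "fst p \<le> Rf A i (snd p)" using assms(1) unfolding memb_def by (auto simp: Rf_def)
  moreover have "Rf A i (snd p) \<le> 2*i + (snd p + 1) div 2" by (rule R_hi)
  ultimately have "fst p + snd p \<le> 2*i + 3 * int n" using b by linarith
  then have kb: "k < 3*n" and ks: "int k = fst p + snd p - 2*i - 1" using b unfolding k_def by auto
  have "memb A n i (pt A i k)" using pt_memb[OF assms(2,3) kb] .
  moreover have "fst (pt A i k) + snd (pt A i k) = fst p + snd p" using pt_sum[OF assms(2), of A k] ks by simp
  ultimately have "pt A i k = p" using memb_unique assms(1) by blast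
  then show ?thesis using kb by blast
qed

definition Pth :: "(int \<Rightarrow> int \<Rightarrow> bool) \<Rightarrow> nat \<Rightarrow> int \<Rightarrow> gpoint list" where
  "Pth A n i = map (pt A i) [0..<3*n]"

lemma pt_inj: assumes "1 \<le> i" shows "inj (pt A i)"
proof (rule injI)
  fix k l assume eq: "pt A i k = pt A i l"
  have "fst (pt A i k) + snd (pt A i k) = fst (pt A i l) + snd (pt A i l)" by (simp only: eq)
  then have "int k = int l" using pt_sum[OF assms, of A k] pt_sum[OF assms, of A l] by linarith
  then show "k = l" by simp
qed

lemma Pth_grid_path:
  assumes "1 \<le> i" "i \<le> int n"
  shows "grid_path (3*n) (2*n) (Pth A n i)"
proof -
  have n1: "1 \<le> n" using assms by simp
  have "length (Pth A n i) \<ge> 2" using n1 by (simp add: Pth_def)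
  moreover have "distinct (Pth A n i)"
    unfolding Pth_def using inj_on_subset[OF pt_inj[OF assms(1), of A] subset_UNIV]
    by (simp add: distinct_map)
  moreover have "\<forall>p\<in>set (Pth A n i). in_grid (3*n) (2*n) p"
  proof
    fix p assume "p \<in> set (Pth A n i)"
    then obtain k where k: "k < 3*n" "p = pt A i k" by (auto simp: Pth_def)
    have "memb A n i p" using pt_memb[OF assms k(1)] k by simp
    then have b: "1 \<le> fst p \<and> fst p \<le> 3 * int n \<and> 2*i \<le> snd p \<and> snd p \<le> 2 * int n"
      using memb_bounds[OF _ assms] by blast
    then have "1 \<le> snd p" using assms by linarith
    then show "in_grid (3*n) (2*n) p" using b unfolding in_grid_def by simp
  qed
  moreover have "\<forall>k. Suc k < length (Pth A n i) \<longrightarrow> grid_adj (Pth A n i ! k) (Pth A n i ! Suc k)"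
  proof (intro allI impI)
    fix k assume "Suc k < length (Pth A n i)"
    then have "Pth A n i ! k = pt A i k" "Pth A n i ! Suc k = pt A i (Suc k)" by (auto simp: Pth_def)
    then show "grid_adj (Pth A n i ! k) (Pth A n i ! Suc k)"
      using pt_step[of A i k] by (auto simp: grid_adj_def)
  qed
  ultimately show ?thesis unfolding grid_path_def by blast
qed

lemma Pth_xy_plus:
  assumes "1 \<le> i" "i \<le> int n"
  shows "xy_plus_monotone (Pth A n i)"
proof -
  have n1: "1 \<le> n" using assms by simp
  have ch: "chain2 (Pth A n i)" unfolding chain2_def
  proof (intro allI impI)
    fix k assume "Suc k < length (Pth A n i)"
    then have "Pth A n i ! k = pt A i k" "Pth A n i ! Suc k = pt A i (Suc k)" by (auto simp: Pth_def)
    then show "le2 (Pth A n i ! k) (Pth A n i ! Suc k)"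
      using pt_step[of A i k] by (auto simp: le2_def)
  qed
  have ne: "Pth A n i \<noteq> []" using n1 by (simp add: Pth_def)
  have h: "hd (Pth A n i) = (1, 2*i)" using n1 by (simp add: Pth_def hd_map)
  have l: "last (Pth A n i) = pt A i (3*n - 1)" using n1
    by (simp add: Pth_def last_map)
  have "memb A n i (pt A i (3*n - 1))" using pt_memb[OF assms] n1 by simp
  then have "1 \<le> fst (last (Pth A n i)) \<and> 2*i \<le> snd (last (Pth A n i))"
    using memb_bounds[OF _ assms] l by simp
  then show ?thesis unfolding xy_plus_monotone_def using chain_xy_monotone[OF ch ne] h
    by (simp add: Let_def)
qed

lemma Pth_edges: "path_edges (Pth A n i) = {{pt A i k, pt A i (Suc k)} | k. Suc k < 3*n}"
proof -
  have "\<And>k. Suc k < 3*n \<Longrightarrow> Pth A n i ! k = pt A i k \<and> Pth A n i ! Suc k = pt A i (Suc k)"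
    by (simp add: Pth_def del: upt_Suc)
  moreover have "length (Pth A n i) = 3*n" by (simp add: Pth_def)
  ultimately show ?thesis unfolding path_edges_def by (metis (no_types, lifting))
qed

lemma memb_inter:
  assumes "memb A n i z" "memb A n j z" "1 \<le> i" "i < j"
  shows "snd z = 2*j"
proof (rule ccontr)
  assume ne: "snd z \<noteq> 2*j"
  then have gt: "2*j < snd z" "Rf A j (snd z - 1) \<le> fst z" using assms(2) unfolding memb_def by auto
  have "2*i < snd z" using gt assms by simp
  then have "fst z \<le> Rf A i (snd z)" using assms(1) unfolding memb_def by auto
  moreover have "Rf A i (snd z) \<le> 2*i + (snd z + 1) div 2" by (rule R_hi)
  moreover have "2*j + (snd z - 1) div 2 \<le> Rf A j (snd z - 1)" by (rule R_lo)
  moreover have "(snd z + 1) div 2 = (snd z - 1) div 2 + 1"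
  proof -
    have "(snd z - 1 + 2) div 2 = (snd z - 1) div 2 + 1" by (rule div_add_self2) simp
    moreover have "snd z - 1 + 2 = snd z + 1" by simp
    ultimately show ?thesis by simp
  qed
  ultimately show False using gt assms(4) by linarith
qed

lemma edge_iff:
  assumes "1 \<le> i" "i < j" "j \<le> int n"
  shows "path_edges (Pth A n i) \<inter> path_edges (Pth A n j) \<noteq> {} \<longleftrightarrow> A i j"
proof
  assume "path_edges (Pth A n i) \<inter> path_edges (Pth A n j) \<noteq> {}"
  then obtain k l where k: "Suc k < 3*n" and l: "Suc l < 3*n"
    and e: "{pt A i k, pt A i (Suc k)} = {pt A j l, pt A j (Suc l)}"
    unfolding Pth_edges by blast
  have i1: "i \<le> int n" "1 \<le> j" using assms by auto
  define p where "p = pt A i k"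
  define q where "q = pt A i (Suc k)"
  have mi: "memb A n i p" "memb A n i q" unfolding p_def q_def using pt_memb[OF assms(1) i1(1)] k by auto
  have mj1: "memb A n j (pt A j l)" "memb A n j (pt A j (Suc l))" using pt_memb[OF i1(2) assms(3)] l by auto
  have "p \<in> {pt A j l, pt A j (Suc l)}" "q \<in> {pt A j l, pt A j (Suc l)}" using e unfolding p_def q_def by auto
  then have mj: "memb A n j p" "memb A n j q" using mj1 by auto
  have sp: "snd p = 2*j" and sq: "snd q = 2*j"
    using memb_inter[OF mi(1) mj(1) assms(1,2)] memb_inter[OF mi(2) mj(2) assms(1,2)] by auto
  have qp: "q = (fst p + 1, snd p)" using pt_step[of A i k] sp sq unfolding p_def q_def by auto
  have "2*i < 2*j" using assms by simp
  then have r: "Rf A i (2*j - 1) \<le> fst p" "fst p + 1 \<le> Rf A i (2*j)"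
    using mi sp sq qp unfolding memb_def by auto
  show "A i j"
  proof (rule ccontr)
    assume nA: "\<not> A i j"
    have a: "2*j - 1 = 2*(j-1) + 1" by simp
    have "Rf A i (2*j - 1) = 2*i + j" using nA unfolding a Rf_def by simp
    moreover have "Rf A i (2*j) = 2*i + j" by (simp add: Rf_def)
    ultimately show False using r by simp
  qed
next
  assume Aij: "A i j"
  have i1: "i \<le> int n" "1 \<le> j" using assms by auto
  define p where "p = (2*i + j - 1, 2*j)"
  define q where "q = (2*i + j, 2*j)"
  have a: "2*j - 1 = 2*(j-1) + 1" by simp
  have R1: "Rf A i (2*j - 1) = 2*i + j - 1" using Aij unfolding a Rf_def by simp
  have R2: "Rf A i (2*j) = 2*i + j" by (simp add: Rf_def)
  have mi: "memb A n i p" "memb A n i q" unfolding memb_def p_def q_def using R1 R2 assms by auto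
  have mj: "memb A n j p" "memb A n j q" unfolding memb_def p_def q_def using assms by auto
  have sums: "fst q + snd q = fst p + snd p + 1" unfolding p_def q_def by simp
  have ex: "\<exists>k. Suc k < 3*n \<and> pt A m k = p \<and> pt A m (Suc k) = q"
    if a1: "memb A n m p" and a2: "memb A n m q" and a3: "1 \<le> m" and a4: "m \<le> int n" for m
  proof -
    obtain k where k: "k < 3*n" "pt A m k = p" using memb_pt[OF a1 a3 a4] by blast
    obtain k' where k': "k' < 3*n" "pt A m k' = q" using memb_pt[OF a2 a3 a4] by blast
    have s1: "fst p + snd p = 2*m + 1 + int k" using pt_sum[OF a3, of A k] unfolding k(2) .
    have s2: "fst q + snd q = 2*m + 1 + int k'" using pt_sum[OF a3, of A k'] unfolding k'(2) .
    have "int k' = int k + 1" using s1 s2 sums by linarith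
    then have "k' = Suc k" by simp
    then show ?thesis using k k' by blast
  qed
  obtain k where "Suc k < 3*n" "pt A i k = p" "pt A i (Suc k) = q" using ex[OF mi assms(1) i1(1)] by blast
  then have "{p, q} \<in> path_edges (Pth A n i)" unfolding Pth_edges by blast
  moreover obtain l where "Suc l < 3*n" "pt A j l = p" "pt A j (Suc l) = q" using ex[OF mj i1(2) assms(3)] by blast
  then have "{p, q} \<in> path_edges (Pth A n j)" unfolding Pth_edges by blast
  ultimately show "path_edges (Pth A n i) \<inter> path_edges (Pth A n j) \<noteq> {}" by blast
qed

theorem theorem3:
  fixes V :: "'v set" and E :: "'v \<Rightarrow> 'v \<Rightarrow> bool" and n :: nat
  assumes "finite V" and "card V = n"
    and "\<And>u v. E u v \<Longrightarrow> u \<in> V \<and> v \<in> V"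
    and "\<And>u v. E u v \<Longrightarrow> E v u"
    and "\<And>v. \<not> E v v"
  shows "\<exists>pth. EPG_rep V E (3 * n) (2 * n) pth \<and> (\<forall>v\<in>V. xy_plus_monotone (pth v))"
proof -
  have cardI: "card {1..int n} = n" by simp
  obtain f where f: "bij_betw f V {1..int n}"
    using finite_same_card_bij[OF assms(1), of "{1..int n}"] assms(2) cardI by auto
  define A where "A i j = E (inv_into V f i) (inv_into V f j)" for i j
  define pth where "pth v = Pth A n (f v)" for v
  have fr: "1 \<le> f v \<and> f v \<le> int n" if "v \<in> V" for v
    using f that by (auto simp: bij_betw_def)
  have inv: "inv_into V f (f v) = v" if "v \<in> V" for v
    using f that bij_betw_inv_into_left by metis
  have Aeq: "A (f u) (f v) = E u v" if "u \<in> V" "v \<in> V" for u v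
    using that by (simp add: A_def inv)
  have inj: "f u \<noteq> f v" if "u \<in> V" "v \<in> V" "u \<noteq> v" for u v
    using f that by (auto simp: bij_betw_def inj_on_def)
  show ?thesis
  proof (rule exI[of _ pth], intro conjI ballI)
    show "EPG_rep V E (3*n) (2*n) pth"
      unfolding EPG_rep_def
    proof (intro conjI ballI impI)
      fix v assume "v \<in> V" then show "grid_path (3*n) (2*n) (pth v)"
        using Pth_grid_path fr unfolding pth_def by blast
    next
      fix v u assume v: "v \<in> V" and u: "u \<in> V" and ne: "v \<noteq> u"
      show "E v u \<longleftrightarrow> path_edges (pth v) \<inter> path_edges (pth u) \<noteq> {}"
      proof (cases "f v < f u")
        case True
        have "path_edges (Pth A n (f v)) \<inter> path_edges (Pth A n (f u)) \<noteq> {} \<longleftrightarrow> A (f v) (f u)"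
          using edge_iff[of "f v" "f u" n A] True fr[OF v] fr[OF u] by blast
        then show ?thesis using Aeq[OF v u] unfolding pth_def by simp
      next
        case False
        then have lt: "f u < f v" using inj[OF v u ne] by simp
        have "path_edges (Pth A n (f u)) \<inter> path_edges (Pth A n (f v)) \<noteq> {} \<longleftrightarrow> A (f u) (f v)"
          using edge_iff[of "f u" "f v" n A] lt fr[OF v] fr[OF u] by blast
        moreover have "E u v \<longleftrightarrow> E v u" using assms(4) by blast
        ultimately show ?thesis using Aeq[OF u v] unfolding pth_def by (simp add: Int_commute)
      qed
    qed
  next
    fix v assume "v \<in> V" then show "xy_plus_monotone (pth v)"
      using Pth_xy_plus fr unfolding pth_def by blast
  qed
qed

end
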